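(* Let $r_1,r_2,r_3$ be pairwise distinct integers with $r_1<0<r_3$ and $\gcd(r_1,r_2,r_3)=1$, and let $v_2\in\mathbb{N}\cup\{\infty\}$. Then $S_{(r_1,r_2,r_3)}^{(\infty,v_2,\infty)}=\mathbb{Z}$ if and only if (A) $S_{(r_1,r_3)}^{(\infty,\infty)}=\mathbb{Z}$, or (B) $r_2\notin S_{(r_1,r_3)}^{(\infty,\infty)}=\langle d'\rangle$, where $d'=\gcd(r_1,r_3)$, and $v_2\geq d'-1$ (with the convention $\infty\ge m$ for every integer $m$).
   Context: Let $L$ be an infinite-dimensional vector space over a field $F$ (of characteristic different from $2$) with basis $e_1,e_2,\dots$, and let $E$ be the Grassmann algebra of $L$: the unital associative algebra generated by $L$ subject to $e_ie_j=-e_je_i$; it has basis consisting of $1$ and the monomials $e_{i_1}\cdots e_{i_k}$ with $i_1<\dots<i_k$. Given pairwise distinct integers $r_1,\dots,r_n$ (lower indices) and $v_1,\dots,v_n\in\mathbb{N}\cup\{\infty\}$ (upper indices), split the basis $\{e_i\}$ into $n$ disjoint sets, the $j$-th of cardinality $v_j$ and spanning a subspace $L_{r_j}^{v_j}$, so $L=L_{r_1}^{v_1}\oplus\cdots\oplus L_{r_n}^{v_n}$. Declare $\|e_k\|=r_j$ iff $e_k\in L_{r_j}^{v_j}$, and $\|e_{k_1}\cdots e_{k_s}\|=\|e_{k_1}\|+\cdots+\|e_{k_s}\|$. This defines a $\mathbb{Z}$-grading $E_{(r_1,\dots,r_n)}^{(v_1,\dots,v_n)}=\bigoplus_{r\in\mathbb{Z}}A_r$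 on $E$ ($A_r$ spanned by the monomials of degree $r$), called an $n$-induced $\mathbb{Z}$-grading. Its support is $S_{(r_1,\dots,r_n)}^{(v_1,\dots,v_n)}=\{r\in\mathbb{Z}: A_r\neq 0\}$. For $d\in\mathbb{Z}$, $\langle d\rangle=d\mathbb{Z}$. *)

theory Defs
  imports Main "HOL-Library.Extended_Nat"
begin

definition ecard :: "nat set \<Rightarrow> enat" where
  "ecard A = (if finite A then enat (card A) else \<infinity>)"

text \<open>The basis of L is e_0, e_1, ... (indexed by nat). A splitting of the basis into n
  disjoint sets is given by a block function blk: e_k lies in the block blk k < n.
  The list rs gives the lower indices r_1..r_n, vs the upper indices v_1..v_n.
  induced_partition rs vs blk: the j-th block has cardinality vs!j and the lower
  indices are pairwise distinct.\<close>
definition induced_partition :: "int list \<Rightarrow> enat list \<Rightarrow> (nat \<Rightarrow> nat) \<Rightarrow> bool" where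
  "induced_partition rs vs blk \<longleftrightarrow>
     length vs = length rs \<and> distinct rs \<and> (\<forall>k. blk k < length rs) \<and>
     (\<forall>j < length rs. ecard {k. blk k = j} = vs ! j)"

text \<open>Degree of the monomial e_{k_1}...e_{k_s} with index set M: sum of the degrees
  of its factors, where deg e_k = rs ! blk k. The monomials (finite index sets M, the
  empty set giving 1) form a basis of E, so A_r is nonzero iff some monomial has
  degree r.\<close>
definition monomial_degree :: "int list \<Rightarrow> (nat \<Rightarrow> nat) \<Rightarrow> nat set \<Rightarrow> int" where
  "monomial_degree rs blk M = (\<Sum>k\<in>M. rs ! blk k)"

definition grading_support :: "int list \<Rightarrow> (nat \<Rightarrow> nat) \<Rightarrow> int set" where
  "grading_support rs blk = {r. \<exists>M. finite M \<and> monomial_degree rs blk M = r}"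

definition int_multiples :: "int \<Rightarrow> int set" where
  "int_multiples d = {d * k | k. True}"

end

theory Submission
  imports Defs
begin

lemma degree_group:
  assumes "finite M" "\<forall>k. blk k < length rs"
  shows "monomial_degree rs blk M = (\<Sum>j<length rs. int (card {x\<in>M. blk x = j}) * rs!j)"
proof -
  have "monomial_degree rs blk M = (\<Sum>j<length rs. \<Sum>k\<in>{x\<in>M. blk x = j}. rs ! blk k)"
    unfolding monomial_degree_def
    by (rule sum.group[symmetric]) (use assms in auto)
  also have "\<dots> = (\<Sum>j<length rs. int (card {x\<in>M. blk x = j}) * rs!j)"
    by (rule sum.cong) auto
  finally show ?thesis .
qed

lemma subset_ecard:
  assumes "enat n \<le> ecard B"
  shows "\<exists>A. A \<subseteq> B \<and> finite A \<and> card A = n"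
proof (cases "finite B")
  case True
  then have "n \<le> card B" using assms by (simp add: ecard_def)
  then show ?thesis by (metis obtain_subset_with_card_n)
next
  case False
  then show ?thesis using infinite_arbitrarily_large by blast
qed

lemma support_char:
  assumes "\<forall>k. blk k < length rs"
  shows "grading_support rs blk =
     {(\<Sum>j<length rs. int (n j) * rs!j) | n. \<forall>j<length rs. enat (n j) \<le> ecard {k. blk k = j}}"
proof (intro equalityI subsetI)
  fix r assume "r \<in> grading_support rs blk"
  then obtain M where M: "finite M" "monomial_degree rs blk M = r"
    unfolding grading_support_def by auto
  let ?n = "\<lambda>j. card {x\<in>M. blk x = j}"
  have n_ok: "\<forall>j<length rs. enat (?n j) \<le> ecard {k. blk k = j}"
  proof (intro allI impI)
    fix j
    show "enat (?n j) \<le> ecard {k. blk k = j}"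
    proof (cases "finite {k. blk k = j}")
      case True
      then have "?n j \<le> card {k. blk k = j}" by (intro card_mono) auto
      then show ?thesis using True by (simp add: ecard_def)
    qed (simp add: ecard_def)
  qed
  show "r \<in> {(\<Sum>j<length rs. int (n j) * rs!j) | n. \<forall>j<length rs. enat (n j) \<le> ecard {k. blk k = j}}"
  proof -
    have "r = (\<Sum>j<length rs. int (?n j) * rs!j)" using degree_group[OF M(1) assms] M(2) by simp
    then show ?thesis apply - apply (rule CollectI) apply (rule exI[where x="?n"]) using n_ok by blast
  qed
next
  fix r assume "r \<in> {(\<Sum>j<length rs. int (n j) * rs!j) | n. \<forall>j<length rs. enat (n j) \<le> ecard {k. blk k = j}}"
  then obtain n where r: "r = (\<Sum>j<length rs. int (n j) * rs!j)"
    and n: "\<forall>j<length rs. enat (n j) \<le> ecard {k. blk k = j}" by auto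
  have "\<forall>j. \<exists>A. j < length rs \<longrightarrow> A \<subseteq> {k. blk k = j} \<and> finite A \<and> card A = n j"
  proof
    fix j show "\<exists>A. j < length rs \<longrightarrow> A \<subseteq> {k. blk k = j} \<and> finite A \<and> card A = n j"
    proof (cases "j < length rs")
      case True
      then show ?thesis using subset_ecard[of "n j" "{k. blk k = j}"] n by auto
    qed simp
  qed
  then obtain A where A: "\<And>j. j < length rs \<Longrightarrow> A j \<subseteq> {k. blk k = j} \<and> finite (A j) \<and> card (A j) = n j"
    by metis
  define M where "M = (\<Union>j<length rs. A j)"
  have fM: "finite M" unfolding M_def using A by auto
  have eq: "{x\<in>M. blk x = j} = A j" if "j < length rs" for j
    unfolding M_def using A that by blast
  have "monomial_degree rs blk M = r"
    unfolding degree_group[OF fM assms] r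
    by (rule sum.cong) (auto simp: eq A)
  then show "r \<in> grading_support rs blk" unfolding grading_support_def using fM by blast
qed

lemma S3_char:
  assumes "induced_partition [r1, r2, r3] [\<infinity>, v2, \<infinity>] blk"
  shows "grading_support [r1, r2, r3] blk = {int a * r1 + int b * r2 + int c * r3 | a b c. enat b \<le> v2}"
proof -
  have bl: "\<forall>k. blk k < length [r1, r2, r3]" and e0: "ecard {k. blk k = 0} = \<infinity>"
    and e1: "ecard {k. blk k = 1} = v2" and e2: "ecard {k. blk k = 2} = \<infinity>"
    using assms unfolding induced_partition_def by (auto dest!: spec[where x=0] spec[where x=1] spec[where x=2])
  have ls: "{..<length [r1,r2,r3]} = {0,1,2::nat}" by auto
  have all3: "(\<forall>j<length [r1,r2,r3]. P j) \<longleftrightarrow> P 0 \<and> P 1 \<and> P 2" for P :: "nat \<Rightarrow> bool"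
    by (auto simp: less_Suc_eq numeral_eq_Suc)
  show ?thesis unfolding support_char[OF bl] ls all3 e0 e1 e2
  proof (intro equalityI subsetI)
    fix x assume "x \<in> {\<Sum>j\<in>{0, 1, 2}. int (n j) * [r1, r2, r3] ! j |n. enat (n 0) \<le> \<infinity> \<and> enat (n 1) \<le> v2 \<and> enat (n 2) \<le> \<infinity>}"
    then obtain n where "x = (\<Sum>j\<in>{0, 1, 2}. int (n j) * [r1, r2, r3] ! j)" "enat (n 1) \<le> v2" by auto
    then show "x \<in> {int a * r1 + int b * r2 + int c * r3 | a b c. enat b \<le> v2}"
      by (intro CollectI exI[where x="n 0"] exI[where x="n 1"] exI[where x="n 2"]) simp
  next
    fix x assume "x \<in> {int a * r1 + int b * r2 + int c * r3 | a b c. enat b \<le> v2}"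
    then obtain a b c where x: "x = int a * r1 + int b * r2 + int c * r3" "enat b \<le> v2" by auto
    define n where "n = (\<lambda>j::nat. if j = 0 then a else if j = 1 then b else c)"
    have "x = (\<Sum>j\<in>{0, 1, 2}. int (n j) * [r1, r2, r3] ! j)" using x by (simp add: n_def)
    moreover have "enat (n 1) \<le> v2" using x by (simp add: n_def)
    ultimately show "x \<in> {\<Sum>j\<in>{0, 1, 2}. int (n j) * [r1, r2, r3] ! j |n. enat (n 0) \<le> \<infinity> \<and> enat (n 1) \<le> v2 \<and> enat (n 2) \<le> \<infinity>}"
      by (intro CollectI exI[where x=n]) simp
  qed
qed

lemma S2_char:
  assumes "induced_partition [r1, r3] [\<infinity>, \<infinity>] blk"
  shows "grading_support [r1, r3] blk = {int a * r1 + int c * r3 | a c. True}"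
proof -
  have bl: "\<forall>k. blk k < length [r1, r3]"
    using assms unfolding induced_partition_def by auto
  have ls: "{..<length [r1,r3]} = {0,1::nat}" by auto
  have all2: "(\<forall>j<length [r1,r3]. P j) \<longleftrightarrow> P 0 \<and> P 1" for P :: "nat \<Rightarrow> bool"
    by (auto simp: less_Suc_eq numeral_eq_Suc)
  show ?thesis unfolding support_char[OF bl] ls all2
  proof (intro equalityI subsetI)
    fix x assume "x \<in> {\<Sum>j\<in>{0, 1}. int (n j) * [r1, r3] ! j |n. enat (n 0) \<le> ecard {k. blk k = 0} \<and> enat (n 1) \<le> ecard {k. blk k = 1}}"
    then obtain n where "x = (\<Sum>j\<in>{0, 1}. int (n j) * [r1, r3] ! j)" by auto
    then show "x \<in> {int a * r1 + int c * r3 | a c. True}"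
      by (intro CollectI exI[where x="n 0"] exI[where x="n 1"]) simp
  next
    have e0: "ecard {k. blk k = 0} = \<infinity>" and e1: "ecard {k. blk k = 1} = \<infinity>"
      using assms unfolding induced_partition_def by (auto dest!: spec[where x=0] spec[where x=1])
    fix x assume "x \<in> {int a * r1 + int c * r3 | a c. True}"
    then obtain a c where x: "x = int a * r1 + int c * r3" by auto
    define n where "n = (\<lambda>j::nat. if j = 0 then a else c)"
    have "x = (\<Sum>j\<in>{0, 1}. int (n j) * [r1, r3] ! j)" using x by (simp add: n_def)
    then show "x \<in> {\<Sum>j\<in>{0, 1}. int (n j) * [r1, r3] ! j |n. enat (n 0) \<le> ecard {k. blk k = 0} \<and> enat (n 1) \<le> ecard {k. blk k = 1}}"
      unfolding e0 e1 by (intro CollectI exI[where x=n]) simp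
  qed
qed


lemma S2_mult:
  fixes r1 r3 :: int
  assumes "r1 < 0" "0 < r3"
  shows "{int a * r1 + int c * r3 | a c. True} = int_multiples (gcd r1 r3)"
proof (intro equalityI subsetI)
  fix x assume "x \<in> {int a * r1 + int c * r3 | a c. True}"
  then obtain a c where x: "x = int a * r1 + int c * r3" by auto
  have "gcd r1 r3 dvd x" unfolding x by simp
  then show "x \<in> int_multiples (gcd r1 r3)" unfolding int_multiples_def
    by (auto elim!: dvdE)
next
  fix x assume "x \<in> int_multiples (gcd r1 r3)"
  then obtain k where x: "x = gcd r1 r3 * k" unfolding int_multiples_def by auto
  obtain u v where uv: "u * r1 + v * r3 = gcd r1 r3" using bezout_int by blast
  define t where "t = \<bar>k*u\<bar> + \<bar>k*v\<bar>"
  have t0: "t \<ge> 0" unfolding t_def by simp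
  define a where "a = k*u + t*r3"
  define c where "c = k*v - t*r1"
  have a0: "a \<ge> 0" unfolding a_def t_def using assms
    by (smt (verit) mult_le_cancel_left1 abs_ge_zero)
  have c0: "c \<ge> 0" unfolding c_def t_def using assms
    by (smt (verit) mult_le_cancel_left1 abs_ge_zero mult_minus_right)
  have "x = a * r1 + c * r3" unfolding x a_def c_def uv[symmetric] by (simp add: algebra_simps)
  then have "x = int (nat a) * r1 + int (nat c) * r3" using a0 c0 by simp
  then show "x \<in> {int a * r1 + int c * r3 | a c. True}" by blast
qed

theorem theorem3p4:
  fixes r1 r2 r3 :: int and v2 :: enat
    and blk :: "nat \<Rightarrow> nat" and blk' :: "nat \<Rightarrow> nat"
  assumes "r1 \<noteq> r2" and "r2 \<noteq> r3" and "r1 \<noteq> r3"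
    and "r1 < 0" and "0 < r3"
    and "gcd r1 (gcd r2 r3) = 1"
    and "induced_partition [r1, r2, r3] [\<infinity>, v2, \<infinity>] blk"
    and "induced_partition [r1, r3] [\<infinity>, \<infinity>] blk'"
  shows "grading_support [r1, r2, r3] blk = UNIV \<longleftrightarrow>
           (grading_support [r1, r3] blk' = UNIV \<or>
            (r2 \<notin> grading_support [r1, r3] blk' \<and>
             grading_support [r1, r3] blk' = int_multiples (gcd r1 r3) \<and>
             enat (nat (gcd r1 r3 - 1)) \<le> v2))"
proof -
  define d where "d = gcd r1 r3"
  have dpos: "d > 0" unfolding d_def using assms(4) by simp
  have S2: "grading_support [r1, r3] blk' = int_multiples d"
    unfolding d_def S2_char[OF assms(8)] S2_mult[OF assms(4,5)] ..
  have S3: "grading_support [r1, r2, r3] blk = {int b * r2 + m | b m. enat b \<le> v2 \<and> d dvd m}"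
  proof -
    have "{int a * r1 + int b * r2 + int c * r3 | a b c. enat b \<le> v2}
        = {int b * r2 + m | b m. enat b \<le> v2 \<and> m \<in> {int a * r1 + int c * r3 | a c. True}}"
    proof (intro equalityI subsetI)
      fix x assume "x \<in> {int a * r1 + int b * r2 + int c * r3 | a b c. enat b \<le> v2}"
      then obtain a b c where "x = int b * r2 + (int a * r1 + int c * r3)" "enat b \<le> v2"
        by (auto simp: algebra_simps)
      then show "x \<in> {int b * r2 + m | b m. enat b \<le> v2 \<and> m \<in> {int a * r1 + int c * r3 | a c. True}}"
        by blast
    next
      fix x assume "x \<in> {int b * r2 + m | b m. enat b \<le> v2 \<and> m \<in> {int a * r1 + int c * r3 | a c. True}}"
      then obtain a b c where "x = int a * r1 + int b * r2 + int c * r3" "enat b \<le> v2"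
        by (auto simp: algebra_simps)
      then show "x \<in> {int a * r1 + int b * r2 + int c * r3 | a b c. enat b \<le> v2}"
        by blast
    qed
    also have "\<dots> = {int b * r2 + m | b m. enat b \<le> v2 \<and> d dvd m}"
      unfolding S2_mult[OF assms(4,5)] int_multiples_def d_def by (auto simp: dvd_def mult.commute)
    finally show ?thesis using S3_char[OF assms(7)] by simp
  qed
  have cop: "coprime r2 d" using assms(6) unfolding d_def
    by (metis coprime_iff_gcd_eq_1 gcd.assoc gcd.commute)
  have mul: "x \<in> int_multiples d \<longleftrightarrow> d dvd x" for x
    unfolding int_multiples_def by (auto simp: dvd_def)
  show ?thesis
  proof (cases "d = 1")
    case True
    have U2: "grading_support [r1, r3] blk' = UNIV" unfolding S2 True using mul[unfolded True] by auto
    have "grading_support [r1, r2, r3] blk = UNIV" unfolding S3 True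
    proof (intro set_eqI iffI)
      fix x :: int
      show "x \<in> {int b * r2 + m |b m. enat b \<le> v2 \<and> 1 dvd m}"
        by (intro CollectI exI[where x=0] exI[where x=x]) (simp add: zero_enat_def[symmetric])
    qed simp
    then show ?thesis using U2 by simp
  next
    case False
    then have d1: "d > 1" using dpos by simp
    have nU: "grading_support [r1, r3] blk' \<noteq> UNIV"
    proof
      assume "grading_support [r1, r3] blk' = UNIV"
      then have "(1::int) \<in> int_multiples d" unfolding S2 by simp
      then have "d dvd 1" using mul by blast
      then show False using d1 by simp
    qed
    have r2n: "r2 \<notin> grading_support [r1, r3] blk'" unfolding S2 mul
    proof
      assume "d dvd r2"
      then have "is_unit d" using cop by (simp add: coprime_absorb_right)
      then show False using d1 by simp
    qed
    obtain u w where uw: "u * r2 + w * d = 1" using bezout_int[of r2 d] cop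
      by (metis coprime_iff_gcd_eq_1)
    have "grading_support [r1, r2, r3] blk = UNIV \<longleftrightarrow> enat (nat (d - 1)) \<le> v2"
    proof
      assume U: "grading_support [r1, r2, r3] blk = UNIV"
      show "enat (nat (d - 1)) \<le> v2"
      proof (rule ccontr)
        assume "\<not> enat (nat (d - 1)) \<le> v2"
        then have lt: "v2 < enat (nat (d - 1))" by simp
        have "(d - 1) * r2 \<in> grading_support [r1, r2, r3] blk" using U by simp
        then obtain b m where bm: "(d - 1) * r2 = int b * r2 + m" "enat b \<le> v2" "d dvd m"
          unfolding S3 by auto
        have "b < nat (d - 1)" using bm(2) lt by (metis enat_ord_simps(2) order.strict_trans1)
        then have b1: "0 < d - 1 - int b" "d - 1 - int b < d" by auto
        have "m = (d - 1 - int b) * r2" using bm(1) by (simp add: algebra_simps)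
        then have "d dvd (d - 1 - int b) * r2" using bm(3) by simp
        then have "d dvd (d - 1 - int b)" using cop
          by (metis coprime_commute coprime_dvd_mult_left_iff)
        then show False using b1 zdvd_imp_le by fastforce
      qed
    next
      assume v: "enat (nat (d - 1)) \<le> v2"
      show "grading_support [r1, r2, r3] blk = UNIV"
      proof (intro set_eqI iffI)
        fix x :: int
        define b where "b = (x * u) mod d"
        have b0: "0 \<le> b" "b < d" unfolding b_def using dpos by auto
        have bv: "enat (nat b) \<le> v2" using v b0 by (meson enat_ord_simps(1) order_trans nat_mono zle_diff1_eq)
        have "d dvd (x * u - b)" unfolding b_def by (simp add: mod_eq_dvd_iff minus_mod_eq_mult_div[symmetric])
        then have "d dvd (x * u - b) * r2" by simp
        moreover have "x - b * r2 = (x * u - b) * r2 + x * w * d"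
        proof -
          have "x = x * (u * r2 + w * d)" using uw by simp
          then show ?thesis by (simp add: algebra_simps)
        qed
        ultimately have "d dvd (x - b * r2)" by simp
        then have "x = int (nat b) * r2 + (x - b * r2) \<and> enat (nat b) \<le> v2 \<and> d dvd (x - b * r2)"
          using b0 bv by simp
        then show "x \<in> grading_support [r1, r2, r3] blk" unfolding S3 by blast
      qed simp
    qed
    then show ?thesis using nU r2n S2 d_def by simp
  qed
qed

end
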